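(* Let $X$ be a complex vector space with $\dim_{\mathbb{C}}X\ge2$ and let $Y$ be a strictly convex complex normed space which is sequentially complete (Banach). Let $\Omega\subset X$ be a polygonally connected $2$-open set and $f\in\mathcal{H}_G(\Omega,Y)$. If $x\mapsto\|f(x)\|$ has a $\tau_{(1)}$-local maximum on $\Omega$, then $f$ is constant.
   Context: $\Gamma_{1,d}(X)$ is the set of complex affine subspaces of $X$ of dimension between $1$ and $d$, with Euclidean topology. $A\subset X$ is $d$-open if $A\cap L$ is open in $L$ for all $L\in\Gamma_{1,d}(X)$. $\tau_{(1)}$ is the topology on $X$ whose open sets are the $1$-open sets; a $\tau_{(1)}$-local maximum at $c$ means there is a $1$-open set $U\ni c$ with $\|f(x)\|\le\|f(c)\|$ for $x\in U\cap\Omega$. Polygonally connected: any two points joined by a polygonal chain in the set. $\mathcal{H}_G(\Omega,Y)$: maps $f$ such that for all $a\in\Omega$, $v\in X$, $\varphi\in Y^*$, $\lambda\mapsto\varphi(f(a+\lambda v))$ is holomorphic near $0$. *)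

theory Defs
  imports "HOL-Analysis.Analysis"
begin

text \<open>The complex vector space X is a type 'a with a complex scalar multiplication
  scX satisfying the vector space axioms (no topology on X).\<close>

definition lin_indep :: "(complex \<Rightarrow> 'a::ab_group_add \<Rightarrow> 'a) \<Rightarrow> 'a set \<Rightarrow> bool" where
  "lin_indep sc B \<longleftrightarrow> \<not> module.dependent sc B"

text \<open>dim_C X \<ge> 2 (dimension possibly infinite): there are two linearly independent vectors.\<close>
definition dim_ge2 :: "(complex \<Rightarrow> 'a::ab_group_add \<Rightarrow> 'a) \<Rightarrow> bool" where
  "dim_ge2 sc \<longleftrightarrow> (\<exists>B. lin_indep sc B \<and> finite B \<and> card B = 2)"

text \<open>A set A is d-open if A \<inter> L is open in L (Euclidean topology) for every complex affine
  subspace L of dimension k, 1 \<le> k \<le> d. L = {a + \<Sum>i<k. c_i v_i} with v_0..v_{k-1} linearly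
  independent; openness in L is openness of the coefficient set in C^k (max-norm balls).\<close>
definition d_open :: "(complex \<Rightarrow> 'a::ab_group_add \<Rightarrow> 'a) \<Rightarrow> nat \<Rightarrow> 'a set \<Rightarrow> bool" where
  "d_open sc d A \<longleftrightarrow>
    (\<forall>k\<in>{1..d}. \<forall>(a::'a) (v::nat \<Rightarrow> 'a).
       inj_on v {..<k} \<and> lin_indep sc (v ` {..<k}) \<longrightarrow>
       (\<forall>c::nat \<Rightarrow> complex. a + (\<Sum>i<k. sc (c i) (v i)) \<in> A \<longrightarrow>
          (\<exists>\<epsilon>>0. \<forall>c'::nat \<Rightarrow> complex. (\<forall>i<k. cmod (c' i - c i) < \<epsilon>) \<longrightarrow>
              a + (\<Sum>i<k. sc (c' i) (v i)) \<in> A)))"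

definition seg :: "(complex \<Rightarrow> 'a::ab_group_add \<Rightarrow> 'a) \<Rightarrow> 'a \<Rightarrow> 'a \<Rightarrow> 'a set" where
  "seg sc p q = {sc (complex_of_real (1 - t)) p + sc (complex_of_real t) q | t. 0 \<le> t \<and> t \<le> 1}"

definition polygonally_connected :: "(complex \<Rightarrow> 'a::ab_group_add \<Rightarrow> 'a) \<Rightarrow> 'a set \<Rightarrow> bool" where
  "polygonally_connected sc S \<longleftrightarrow>
    (\<forall>x\<in>S. \<forall>y\<in>S. \<exists>ps::'a list. ps \<noteq> [] \<and> hd ps = x \<and> last ps = y \<and>
        (\<forall>i. Suc i < length ps \<longrightarrow> seg sc (ps ! i) (ps ! Suc i) \<subseteq> S))"

text \<open>Y is a (real) Banach space 'b with a complex scalar multiplication scY compatible with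
  the real one and with the norm, i.e. a complex Banach space.\<close>
definition complex_normed_structure :: "(complex \<Rightarrow> 'b::real_normed_vector \<Rightarrow> 'b) \<Rightarrow> bool" where
  "complex_normed_structure sc \<longleftrightarrow> vector_space sc \<and>
     (\<forall>r y. sc (complex_of_real r) y = r *\<^sub>R y) \<and>
     (\<forall>c y. norm (sc c y) = cmod c * norm y)"

definition strictly_convex :: "'b::real_normed_vector itself \<Rightarrow> bool" where
  "strictly_convex _ \<longleftrightarrow> (\<forall>x y::'b. norm x = 1 \<and> norm y = 1 \<and> x \<noteq> y \<longrightarrow> norm ((1/2) *\<^sub>R (x + y)) < 1)"

definition cdual :: "(complex \<Rightarrow> 'b::real_normed_vector \<Rightarrow> 'b) \<Rightarrow> ('b \<Rightarrow> complex) \<Rightarrow> bool" where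
  "cdual sc \<phi> \<longleftrightarrow> (\<forall>x y. \<phi> (x + y) = \<phi> x + \<phi> y) \<and> (\<forall>c y. \<phi> (sc c y) = c * \<phi> y) \<and>
     (\<exists>K. \<forall>y. cmod (\<phi> y) \<le> K * norm y)"

definition gateaux_holomorphic ::
  "(complex \<Rightarrow> 'a::ab_group_add \<Rightarrow> 'a) \<Rightarrow> (complex \<Rightarrow> 'b::real_normed_vector \<Rightarrow> 'b) \<Rightarrow> 'a set \<Rightarrow> ('a \<Rightarrow> 'b) \<Rightarrow> bool" where
  "gateaux_holomorphic scX scY \<Omega> f \<longleftrightarrow>
     (\<forall>a\<in>\<Omega>. \<forall>v. \<forall>\<phi>. cdual scY \<phi> \<longrightarrow>
        (\<exists>r>0. (\<lambda>z. \<phi> (f (a + scX z v))) holomorphic_on ball 0 r))"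

definition tau1_local_max ::
  "(complex \<Rightarrow> 'a::ab_group_add \<Rightarrow> 'a) \<Rightarrow> 'a set \<Rightarrow> ('a \<Rightarrow> 'b::real_normed_vector) \<Rightarrow> 'a \<Rightarrow> bool" where
  "tau1_local_max scX \<Omega> f c \<longleftrightarrow>
     (\<exists>U. d_open scX 1 U \<and> c \<in> U \<and> (\<forall>x\<in>U \<inter> \<Omega>. norm (f x) \<le> norm (f c)))"

end

theory Submission
  imports Defs "HOL-Complex_Analysis.Complex_Analysis"
begin


definition sublin :: "('b::real_vector \<Rightarrow> real) \<Rightarrow> bool" where
  "sublin q \<longleftrightarrow> (\<forall>x y. q (x + y) \<le> q x + q y) \<and> (\<forall>t x. t \<ge> 0 \<longrightarrow> q (t *\<^sub>R x) = t * q x)"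

lemma sublin_zero: "sublin q \<Longrightarrow> q 0 = 0"
proof -
  assume "sublin q"
  then have "q (0 *\<^sub>R 0) = 0 * q 0" unfolding sublin_def by blast
  then show "q 0 = 0" by simp
qed

lemma sublin_neg: "sublin q \<Longrightarrow> - q (- x) \<le> q x"
proof -
  assume a: "sublin q"
  then have "q (x + - x) \<le> q x + q (- x)" unfolding sublin_def by blast
  then show ?thesis using sublin_zero[OF a] by simp
qed

definition shift :: "('b::real_vector \<Rightarrow> real) \<Rightarrow> 'b \<Rightarrow> 'b \<Rightarrow> real" where
  "shift q x0 x = (INF t\<in>{0..}. q (x + t *\<^sub>R x0) - t * q x0)"

lemma shift_bdd:
  assumes "sublin q"
  shows "bdd_below ((\<lambda>t. q (x + t *\<^sub>R x0) - t * q x0) ` {0..})"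
proof (rule bdd_belowI2[where m="- q (- x)"])
  fix t :: real assume "t \<in> {0..}"
  then have "q (t *\<^sub>R x0) = t * q x0" using assms unfolding sublin_def by auto
  moreover have "q (t *\<^sub>R x0) \<le> q (x + t *\<^sub>R x0) + q (- x)"
  proof -
    have "q ((x + t *\<^sub>R x0) + - x) \<le> q (x + t *\<^sub>R x0) + q (- x)" using assms unfolding sublin_def by blast
    moreover have "(x + t *\<^sub>R x0) + - x = t *\<^sub>R x0" by simp
    ultimately show ?thesis by simp
  qed
  ultimately show "- q (- x) \<le> q (x + t *\<^sub>R x0) - t * q x0" by linarith
qed

lemma shift_le:
  assumes "sublin q" "t \<ge> 0"
  shows "shift q x0 x \<le> q (x + t *\<^sub>R x0) - t * q x0"
  unfolding shift_def by (rule cINF_lower[OF shift_bdd[OF assms(1)]]) (use assms in auto)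

lemma shift_ge:
  assumes "\<And>t. t \<ge> 0 \<Longrightarrow> m \<le> q (x + t *\<^sub>R x0) - t * q x0"
  shows "m \<le> shift q x0 x"
  unfolding shift_def by (rule cINF_greatest) (use assms in auto)

lemma shift_le_q: "sublin q \<Longrightarrow> shift q x0 x \<le> q x"
  using shift_le[of q 0 x0 x] by simp



lemma shift_sublin:
  assumes q: "sublin q"
  shows "sublin (shift q x0)"
  unfolding sublin_def
proof (intro conjI allI impI)
  fix x y
  have "shift q x0 (x + y) - (q (y + t *\<^sub>R x0) - t * q x0) \<le> q (x + s *\<^sub>R x0) - s * q x0"
    if "s \<ge> 0" "t \<ge> 0" for s t
  proof -
    have "shift q x0 (x + y) \<le> q ((x + y) + (s + t) *\<^sub>R x0) - (s + t) * q x0"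
      using shift_le[OF q, of "s+t"] that by simp
    also have "q ((x + y) + (s + t) *\<^sub>R x0) \<le> q (x + s *\<^sub>R x0) + q (y + t *\<^sub>R x0)"
    proof -
      have eq: "(x + y) + (s + t) *\<^sub>R x0 = (x + s *\<^sub>R x0) + (y + t *\<^sub>R x0)" by (simp add: algebra_simps)
      show ?thesis unfolding eq using q unfolding sublin_def by blast
    qed
    finally show ?thesis by (simp add: algebra_simps)
  qed
  then have "shift q x0 (x + y) - (q (y + t *\<^sub>R x0) - t * q x0) \<le> shift q x0 x" if "t \<ge> 0" for t
    using that by (intro shift_ge) auto
  then have "shift q x0 (x + y) - shift q x0 x \<le> shift q x0 y"
    by (intro shift_ge) (auto simp: algebra_simps)
  then show "shift q x0 (x + y) \<le> shift q x0 x + shift q x0 y" by simp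
next
  fix t :: real and x assume t: "t \<ge> 0"
  show "shift q x0 (t *\<^sub>R x) = t * shift q x0 x"
  proof (cases "t = 0")
    case True
    have "shift q x0 0 = 0"
    proof (rule antisym)
      show "shift q x0 0 \<le> 0" using shift_le_q[OF q, of x0 0] sublin_zero[OF q] by simp
      show "0 \<le> shift q x0 0"
        by (rule shift_ge) (use q in \<open>auto simp: sublin_def\<close>)
    qed
    then show ?thesis using True by simp
  next
    case False
    with t have tp: "t > 0" by simp
    have hom: "q (t *\<^sub>R z) = t * q z" for z using q t unfolding sublin_def by auto
    show ?thesis
    proof (rule antisym)
      have "shift q x0 (t *\<^sub>R x) / t \<le> q (x + s *\<^sub>R x0) - s * q x0" if "s \<ge> 0" for s
      proof -
        have eqv: "t *\<^sub>R x + (t * s) *\<^sub>R x0 = t *\<^sub>R (x + s *\<^sub>R x0)" by (simp add: algebra_simps)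
        have "shift q x0 (t *\<^sub>R x) \<le> q (t *\<^sub>R x + (t * s) *\<^sub>R x0) - (t * s) * q x0"
          using shift_le[OF q, of "t * s"] that tp by simp
        then have "shift q x0 (t *\<^sub>R x) \<le> q (t *\<^sub>R (x + s *\<^sub>R x0)) - (t * s) * q x0"
          unfolding eqv .
        then have "shift q x0 (t *\<^sub>R x) \<le> t * q (x + s *\<^sub>R x0) - (t * s) * q x0"
          unfolding hom .
        moreover have "t * q (x + s *\<^sub>R x0) - (t * s) * q x0 = t * (q (x + s *\<^sub>R x0) - s * q x0)"
          by (simp add: algebra_simps)
        ultimately have "shift q x0 (t *\<^sub>R x) \<le> t * (q (x + s *\<^sub>R x0) - s * q x0)" by linarith
        then show ?thesis using tp by (simp add: divide_simps mult.commute)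
      qed
      then have "shift q x0 (t *\<^sub>R x) / t \<le> shift q x0 x" by (intro shift_ge)
      then show "shift q x0 (t *\<^sub>R x) \<le> t * shift q x0 x" using tp by (simp add: divide_simps mult.commute)
      have "t * shift q x0 x \<le> q (t *\<^sub>R x + s *\<^sub>R x0) - s * q x0" if "s \<ge> 0" for s
      proof -
        have "shift q x0 x \<le> q (x + (s/t) *\<^sub>R x0) - (s/t) * q x0"
          using shift_le[OF q, of "s/t"] that tp by simp
        then have "t * shift q x0 x \<le> t * (q (x + (s/t) *\<^sub>R x0) - (s/t) * q x0)"
          using tp by simp
        also have "\<dots> = t * q (x + (s/t) *\<^sub>R x0) - s * q x0" using tp by (simp add: algebra_simps)
        also have "t * q (x + (s/t) *\<^sub>R x0) = q (t *\<^sub>R (x + (s/t) *\<^sub>R x0))" by (rule hom[symmetric])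
        also have "t *\<^sub>R (x + (s/t) *\<^sub>R x0) = t *\<^sub>R x + s *\<^sub>R x0" using tp by (simp add: algebra_simps)
        finally show ?thesis .
      qed
      then show "t * shift q x0 x \<le> shift q x0 (t *\<^sub>R x)" by (intro shift_ge)
    qed
  qed
qed



definition HBset :: "'b::real_normed_vector \<Rightarrow> ('b \<Rightarrow> real) set" where
  "HBset y0 = {q. sublin q \<and> (\<forall>x. q x \<le> norm x) \<and> q (- y0) \<le> - norm y0}"

lemma sublin_norm: "sublin (norm :: 'b::real_normed_vector \<Rightarrow> real)"
  unfolding sublin_def by (auto simp: norm_triangle_ineq)

lemma HBset_nonempty: "shift norm y0 \<in> HBset y0"
  unfolding HBset_def
  using shift_sublin[OF sublin_norm] shift_le_q[OF sublin_norm] shift_le[OF sublin_norm, of 1 y0 "-y0"]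
  by auto

lemma sublin_lower: "sublin q \<Longrightarrow> (\<forall>x. q x \<le> norm x) \<Longrightarrow> - norm x \<le> q x"
proof -
  assume a: "sublin q" "\<forall>x. q x \<le> norm x"
  have "q (- x) \<le> norm (- x)" using a(2) by blast
  then show ?thesis using sublin_neg[OF a(1), of x] by simp
qed

lemma chain_inf:
  fixes C :: "('b::real_normed_vector \<Rightarrow> real) set"
  assumes ne: "C \<noteq> {}" and CA: "C \<subseteq> HBset y0"
    and ch: "\<And>a b. a \<in> C \<Longrightarrow> b \<in> C \<Longrightarrow> (\<forall>x. a x \<le> b x) \<or> (\<forall>x. b x \<le> a x)"
  shows "(\<lambda>x. INF q\<in>C. q x) \<in> HBset y0" "\<And>q x. q \<in> C \<Longrightarrow> (INF q\<in>C. q x) \<le> q x"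
proof -
  have bdd: "bdd_below ((\<lambda>q. q x) ` C)" for x
    proof (rule bdd_belowI2[where m="- norm x"])
    fix q assume "q \<in> C"
    then have "sublin q" "\<forall>x. q x \<le> norm x" using CA by (auto simp: HBset_def)
    then show "- norm x \<le> q x" by (rule sublin_lower)
  qed
  show low: "\<And>q x. q \<in> C \<Longrightarrow> (INF q\<in>C. q x) \<le> q x" by (rule cINF_lower[OF bdd])
  have gr: "m \<le> (INF q\<in>C. q x)" if "\<And>q. q \<in> C \<Longrightarrow> m \<le> q x" for m x
    by (rule cINF_greatest) (use ne that in auto)
  let ?u = "\<lambda>x. INF q\<in>C. q x"
  have sl: "sublin q" if "q \<in> C" for q using that CA by (auto simp: HBset_def)
  have "sublin ?u"
    unfolding sublin_def
  proof (intro conjI allI impI)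
    fix x y
    have H: "?u (x + y) - q2 y \<le> q1 x" if "q1 \<in> C" "q2 \<in> C" for q1 q2
    proof -
      from ch[OF that] consider "\<forall>x. q1 x \<le> q2 x" | "\<forall>x. q2 x \<le> q1 x" by blast
      then show ?thesis
      proof cases
        case 1
        have "?u (x+y) \<le> q1 (x + y)" by (rule low[OF that(1)])
        also have "\<dots> \<le> q1 x + q1 y" using sl[OF that(1)] unfolding sublin_def by auto
        moreover have "q1 y \<le> q2 y" using 1 by blast
        ultimately show ?thesis by linarith
      next
        case 2
        have "?u (x+y) \<le> q2 (x + y)" by (rule low[OF that(2)])
        also have "\<dots> \<le> q2 x + q2 y" using sl[OF that(2)] unfolding sublin_def by auto
        moreover have "q2 x \<le> q1 x" using 2 by blast
        ultimately show ?thesis by linarith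
      qed
    qed
    have H2: "?u (x + y) - q2 y \<le> ?u x" if "q2 \<in> C" for q2
      by (rule gr) (rule H[OF _ that])
    have "?u (x + y) - ?u x \<le> q2 y" if "q2 \<in> C" for q2
      using H2[OF that] by linarith
    then have "?u (x + y) - ?u x \<le> ?u y" by (rule gr)
    then show "?u (x + y) \<le> ?u x + ?u y" by simp
  next
    fix t :: real and x assume t: "t \<ge> 0"
    have hom: "q (t *\<^sub>R x) = t * q x" if "q \<in> C" for q using sl[OF that] t unfolding sublin_def by auto
    show "?u (t *\<^sub>R x) = t * ?u x"
    proof (cases "t = 0")
      case True
      have "?u (t *\<^sub>R x) = (INF q\<in>C. (0::real))" using hom True by (intro INF_cong) auto
      also have "\<dots> = 0" using ne by simp
      finally show ?thesis using True by simp
    next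
      case False
      with t have tp: "t > 0" by simp
      show ?thesis
      proof (rule antisym)
        have "?u (t *\<^sub>R x) / t \<le> q x" if "q \<in> C" for q
          using low[OF that, of "t *\<^sub>R x"] hom[OF that] tp by (simp add: divide_simps mult.commute)
        then have "?u (t *\<^sub>R x) / t \<le> ?u x" by (intro gr)
        then show "?u (t *\<^sub>R x) \<le> t * ?u x" using tp by (simp add: divide_simps mult.commute)
        have "t * ?u x \<le> q (t *\<^sub>R x)" if "q \<in> C" for q
          using low[OF that, of x] hom[OF that] tp by simp
        then show "t * ?u x \<le> ?u (t *\<^sub>R x)" by (intro gr)
      qed
    qed
  qed
  note slu = this
  obtain q0 where q0: "q0 \<in> C" using ne by blast
  have q0in: "q0 \<in> HBset y0" using CA q0 by blast
  have n1: "q0 x \<le> norm x" for x using q0in unfolding HBset_def by blast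
  have n2: "q0 (- y0) \<le> - norm y0" using q0in unfolding HBset_def by blast
  have "?u x \<le> norm x" for x using low[OF q0, of x] n1[of x] by linarith
  moreover have "?u (- y0) \<le> - norm y0" using low[OF q0, of "- y0"] n2 by linarith
  ultimately show "?u \<in> HBset y0"
    unfolding HBset_def using slu by blast
qed

lemma real_HB:
  fixes y0 :: "'b::real_normed_vector"
  shows "\<exists>\<psi>. (\<forall>x y. \<psi> (x + y) = \<psi> x + \<psi> y) \<and> (\<forall>t x. \<psi> (t *\<^sub>R x) = t * \<psi> x)
            \<and> \<psi> y0 = norm y0 \<and> (\<forall>x. \<psi> x \<le> norm x)"
proof -
  let ?A = "HBset y0"
  let ?P = "\<lambda>q1 q2::'b\<Rightarrow>real. \<forall>x. q2 x \<le> q1 x"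
  have po: "partial_order_on ?A (relation_of ?P ?A)"
    unfolding partial_order_on_def preorder_on_def refl_on_def trans_def antisym_def relation_of_def
    by (auto intro: order_trans intro!: ext antisym)
  have "\<exists>u\<in>?A. \<forall>a\<in>C. ?P a u" if C: "C \<in> Chains (relation_of ?P ?A)" for C
  proof (cases "C = {}")
    case True then show ?thesis using HBset_nonempty by blast
  next
    case False
    have CA: "C \<subseteq> ?A" using C unfolding Chains_def relation_of_def by auto
    have ch: "(\<forall>x. a x \<le> b x) \<or> (\<forall>x. b x \<le> a x)" if "a \<in> C" "b \<in> C" for a b
      using C that unfolding Chains_def relation_of_def by auto
    have "(\<lambda>x. INF q\<in>C. q x) \<in> HBset y0" by (rule chain_inf(1)[OF False CA]) (use ch in blast)
    moreover have "\<forall>a\<in>C. \<forall>x. (INF q\<in>C. q x) \<le> a x"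
      using chain_inf(2)[OF False CA] ch by blast
    ultimately show ?thesis by (intro bexI[where x="\<lambda>x. INF q\<in>C. q x"]) auto
  qed
  from predicate_Zorn[OF po this] obtain m where m: "m \<in> ?A" and min: "\<And>a. a \<in> ?A \<Longrightarrow> ?P m a \<Longrightarrow> a = m"
    by blast
  have slm: "sublin m" and mle: "\<And>x. m x \<le> norm x" and my: "m (- y0) \<le> - norm y0"
    using m by (auto simp: HBset_def)
  have neg: "m (- x0) = - m x0" for x0
  proof -
    have "shift m x0 \<in> ?A"
      using shift_sublin[OF slm] shift_le_q[OF slm, of x0] mle my unfolding HBset_def by (auto intro: order_trans[OF _ mle] order_trans[OF _ my])
    moreover have "?P m (shift m x0)" using shift_le_q[OF slm] by auto
    ultimately have eq: "shift m x0 = m" using min by blast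
    have "m (- x0) \<le> m (- x0 + 1 *\<^sub>R x0) - 1 * m x0"
      using shift_le[OF slm, of 1 x0 "- x0"] eq by simp
    then have "m (- x0) \<le> - m x0" using sublin_zero[OF slm] by simp
    then show ?thesis using sublin_neg[OF slm, of x0] by linarith
  qed
  have add: "m (x + y) = m x + m y" for x y
  proof -
    have "m (x + y) \<le> m x + m y" using slm unfolding sublin_def by auto
    moreover have "m (- x + - y) \<le> m (-x) + m (-y)" using slm unfolding sublin_def by blast
    then have "- m (x + y) \<le> - m x - m y" using neg[of "x+y"] neg[of x] neg[of y] by (simp add: add.commute)
    ultimately show ?thesis by linarith
  qed
  have sc: "m (t *\<^sub>R x) = t * m x" for t x
  proof (cases "t \<ge> 0")
    case True then show ?thesis using slm unfolding sublin_def by auto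
  next
    case False
    have hom0: "\<forall>s\<ge>0. \<forall>x. m (s *\<^sub>R x) = s * m x" using slm unfolding sublin_def by blast
    have h: "m ((-t) *\<^sub>R x) = (-t) * m x" by (rule hom0[rule_format]) (use False in linarith)
    have "m (t *\<^sub>R x) = m (- ((-t) *\<^sub>R x))" by simp
    also have "\<dots> = - m ((-t) *\<^sub>R x)" by (rule neg)
    finally show ?thesis using h by simp
  qed
  have "m y0 = norm y0" using mle[of y0] my neg[of y0] by simp
  then show ?thesis using add sc mle by blast
qed




lemma cns_vs: "complex_normed_structure scY \<Longrightarrow> vector_space scY"
  unfolding complex_normed_structure_def by blast

lemma cns_real: "complex_normed_structure scY \<Longrightarrow> scY (complex_of_real r) y = r *\<^sub>R y"
  unfolding complex_normed_structure_def by blast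

lemma cns_norm: "complex_normed_structure scY \<Longrightarrow> norm (scY c y) = cmod c * norm y"
  unfolding complex_normed_structure_def by blast

lemma cns_decomp:
  assumes cns: "complex_normed_structure scY"
  shows "scY (Complex a b) y = a *\<^sub>R y + b *\<^sub>R (scY \<i> y)"
proof -
  interpret V: vector_space scY by (rule cns_vs[OF cns])
  have "Complex a b = complex_of_real a + complex_of_real b * \<i>" by (simp add: complex_eq_iff)
  then have "scY (Complex a b) y = scY (complex_of_real a) y + scY (complex_of_real b * \<i>) y"
    by (simp add: V.scale_left_distrib)
  also have "scY (complex_of_real b * \<i>) y = scY (complex_of_real b) (scY \<i> y)"
    by (rule V.scale_scale[symmetric])
  finally have "scY (Complex a b) y = scY (complex_of_real a) y + scY (complex_of_real b) (scY \<i> y)" .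
  then show ?thesis by (simp only: cns_real[OF cns])
qed

lemma complex_HB:
  fixes y0 :: "'b::real_normed_vector"
  assumes cns: "complex_normed_structure scY"
  shows "\<exists>\<phi>. cdual scY \<phi> \<and> \<phi> y0 = complex_of_real (norm y0) \<and> (\<forall>y. cmod (\<phi> y) \<le> norm y)"
proof -
  interpret V: vector_space scY by (rule cns_vs[OF cns])
  obtain \<psi> where add: "\<And>x y. \<psi> (x + y) = \<psi> x + \<psi> y" and sc: "\<And>t x. \<psi> (t *\<^sub>R x) = t * \<psi> x"
    and py: "\<psi> y0 = norm y0" and pb: "\<And>x. \<psi> x \<le> norm x"
    using real_HB[of y0] by blast
  define I where "I y = scY \<i> y" for y
  define \<phi> where "\<phi> y = Complex (\<psi> y) (- \<psi> (I y))" for y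
  have Iadd: "I (x + y) = I x + I y" for x y unfolding I_def by (rule V.scale_right_distrib)
  have \<phi>add: "\<phi> (x + y) = \<phi> x + \<phi> y" for x y unfolding \<phi>_def by (simp add: Iadd add complex_eq_iff)
  have Isc: "I (t *\<^sub>R x) = t *\<^sub>R I x" for t x
    unfolding I_def cns_real[OF cns, symmetric] V.scale_scale by (simp add: mult.commute)
  have dec: "scY c y = Re c *\<^sub>R y + Im c *\<^sub>R I y" for c y
    using cns_decomp[OF cns, of "Re c" "Im c" y] unfolding I_def by simp
  have \<psi>sc: "\<psi> (scY c y) = Re c * \<psi> y + Im c * \<psi> (I y)" for c y
    unfolding dec by (simp add: add sc)
  have Isc2: "I (scY c y) = scY (\<i> * c) y" for c y unfolding I_def V.scale_scale ..
  have \<phi>sc: "\<phi> (scY c y) = c * \<phi> y" for c y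
  proof -
    have "\<psi> (I (scY c y)) = - Im c * \<psi> y + Re c * \<psi> (I y)"
      unfolding Isc2 \<psi>sc by simp
    then show ?thesis unfolding \<phi>_def using \<psi>sc[of c y] by (simp add: complex_eq_iff algebra_simps)
  qed
  have Re\<phi>: "Re (\<phi> y) = \<psi> y" for y unfolding \<phi>_def by simp
  have bnd: "cmod (\<phi> y) \<le> norm y" for y
  proof (cases "\<phi> y = 0")
    case True then show ?thesis by simp
  next
    case False
    define w where "w = \<phi> y"
    define u where "u = cnj w / complex_of_real (cmod w)"
    have cu: "cmod u = 1" using False unfolding u_def w_def by (simp add: norm_divide)
    have "u * w = complex_of_real (cmod w)"
      using False unfolding u_def w_def
      by (simp add: complex_norm_square[symmetric] power2_eq_square field_simps)
    then have "\<phi> (scY u y) = complex_of_real (cmod w)" using \<phi>sc w_def by simp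
    then have "cmod w = \<psi> (scY u y)" using Re\<phi>[of "scY u y"] by simp
    also have "\<dots> \<le> norm (scY u y)" by (rule pb)
    also have "\<dots> = norm y" using cns_norm[OF cns] cu by simp
    finally show ?thesis unfolding w_def .
  qed
  have "cdual scY \<phi>" unfolding cdual_def using \<phi>add \<phi>sc bnd by (metis mult_1)
  moreover have "\<phi> y0 = complex_of_real (norm y0)"
  proof -
    have r: "Re (\<phi> y0) = norm y0" using Re\<phi> py by simp
    have "(cmod (\<phi> y0))^2 \<le> (norm y0)^2" using bnd[of y0] by (simp add: power_mono)
    then have "Re (\<phi> y0) ^ 2 + Im (\<phi> y0) ^ 2 \<le> (norm y0)^2" by (simp add: cmod_power2)
    then have "Im (\<phi> y0) = 0" using r by simp
    then show ?thesis using r by (simp add: complex_eq_iff)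
  qed
  ultimately show ?thesis using bnd by blast
qed




lemma PD:
  fixes G :: "complex \<Rightarrow> complex \<Rightarrow> complex"
  assumes hol: "\<And>z1 z2 d1 d2. cmod (z1 - c) < e \<Longrightarrow> cmod z2 < e \<Longrightarrow>
                  \<exists>r>0. (\<lambda>t. G (z1 + t*d1) (z2 + t*d2)) holomorphic_on ball 0 r"
    and a: "cmod (a1 - c) < e" "cmod a2 < e"
    and lc: "\<And>d1 d2. \<exists>\<epsilon>>0. \<forall>t. cmod t < \<epsilon> \<longrightarrow> G (a1 + t*d1) (a2 + t*d2) = K"
    and z: "cmod (z1 - c) < e" "cmod z2 < e"
  shows "G z1 z2 = K"
proof -
  define d1 where "d1 = z1 - a1"
  define d2 where "d2 = z2 - a2"
  define T where "T = {t. cmod (a1 + t*d1 - c) < e \<and> cmod (a2 + t*d2) < e}"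
  define h where "h t = G (a1 + t*d1) (a2 + t*d2)" for t
  have nm: "cmod (- a - b) = cmod (a + b)" for a b :: complex
    by (subst norm_minus_commute) (simp add: add.commute)
  have Teq: "T = (\<lambda>t. t*d1) -` ball (c - a1) e \<inter> (\<lambda>t. t*d2) -` ball (- a2) e"
    unfolding T_def by (auto simp: dist_norm norm_minus_commute algebra_simps nm)
  have "convex T" unfolding Teq
    by (intro convex_Int convex_linear_vimage convex_ball bounded_linear.linear[OF bounded_linear_mult_left])
  then have conT: "connected T" by (rule convex_connected)
  have opT: "open T" unfolding T_def
    by (intro open_Collect_conj open_Collect_less continuous_intros)
  have T0: "0 \<in> T" using a unfolding T_def by simp
  have T1: "1 \<in> T" using z unfolding T_def d1_def d2_def by simp
  have "h holomorphic_on T"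
    unfolding holomorphic_on_def
  proof
    fix t assume t: "t \<in> T"
    then have "cmod (a1 + t*d1 - c) < e" "cmod (a2 + t*d2) < e" unfolding T_def by auto
    from hol[OF this, of d1 d2] obtain r where r: "r > 0"
      and H: "(\<lambda>s. G (a1 + t*d1 + s*d1) (a2 + t*d2 + s*d2)) holomorphic_on ball 0 r" by blast
    have "(\<lambda>s. G (a1 + t*d1 + s*d1) (a2 + t*d2 + s*d2)) field_differentiable at 0"
      by (rule holomorphic_on_imp_differentiable_at[OF H]) (use r in auto)
    then have "(\<lambda>s. G (a1 + t*d1 + s*d1) (a2 + t*d2 + s*d2)) field_differentiable at ((\<lambda>s. s - t) t)"
      by simp
    then have "((\<lambda>s. G (a1 + t*d1 + s*d1) (a2 + t*d2 + s*d2)) \<circ> (\<lambda>s. s - t)) field_differentiable at t"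
      by (intro field_differentiable_compose) (auto intro!: derivative_intros simp: field_differentiable_def)
    moreover have "((\<lambda>s. G (a1 + t*d1 + s*d1) (a2 + t*d2 + s*d2)) \<circ> (\<lambda>s. s - t)) = h"
      unfolding h_def by (auto simp: algebra_simps)
    ultimately show "h field_differentiable at t within T"
      by (simp add: field_differentiable_at_within)
  qed
  then have holh: "(\<lambda>t. h t - K) holomorphic_on T" by (intro holomorphic_intros)
  obtain \<epsilon> where \<epsilon>: "\<epsilon> > 0" "\<And>t. cmod t < \<epsilon> \<Longrightarrow> h t = K" using lc[of d1 d2] unfolding h_def by blast
  obtain e0 where e0: "e0 > 0" "ball 0 e0 \<subseteq> T" using opT T0 open_contains_ball by blast
  have "h 1 - K = 0"
  proof (rule analytic_continuation[OF holh opT conT, of "ball 0 (min e0 \<epsilon>)" 0])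
    show "ball 0 (min e0 \<epsilon>) \<subseteq> T" using e0 by auto
    show "(0::complex) \<in> T" by (rule T0)
    show "(0::complex) islimpt ball 0 (min e0 \<epsilon>)" by (rule islimpt_ball[THEN iffD2]) (use e0 \<epsilon> in auto)
    show "h z - K = 0" if "z \<in> ball 0 (min e0 \<epsilon>)" for z using that \<epsilon> by auto
    show "1 \<in> T" by (rule T1)
  qed
  then show ?thesis unfolding h_def d1_def d2_def by simp
qed

lemma AL:
  fixes G :: "complex \<Rightarrow> complex \<Rightarrow> complex"
  assumes hol: "\<And>z1 z2 d1 d2. inW z1 z2 \<Longrightarrow> \<exists>r>0. (\<lambda>t. G (z1 + t*d1) (z2 + t*d2)) holomorphic_on ball 0 r"
    and segW: "\<And>s. 0 \<le> s \<Longrightarrow> s \<le> 1 \<Longrightarrow> \<exists>\<epsilon>>0. \<forall>z1 z2. cmod (z1 - of_real s) < \<epsilon> \<and> cmod z2 < \<epsilon> \<longrightarrow> inW z1 z2"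
    and lc0: "\<And>d1 d2. \<exists>\<epsilon>>0. \<forall>t. cmod t < \<epsilon> \<longrightarrow> G (t*d1) (t*d2) = K"
  shows "\<exists>\<delta>>0. \<forall>z1 z2. cmod (z1 - 1) < \<delta> \<and> cmod z2 < \<delta> \<longrightarrow> G z1 z2 = K"
proof -
  obtain E where E: "\<And>s. s \<in> {0..1} \<Longrightarrow> E s > 0 \<and> (\<forall>z1 z2. cmod (z1 - of_real s) < E s \<and> cmod z2 < E s \<longrightarrow> inW z1 z2)"
    using segW by (metis atLeastAtMost_iff)
  define P where "P s \<longleftrightarrow> (\<exists>\<delta>>0. \<forall>z1 z2. cmod (z1 - of_real s) < \<delta> \<and> cmod z2 < \<delta> \<longrightarrow> G z1 z2 = K)" for s :: real
  have key: "G z1 z2 = K" if s: "s \<in> {0..1}" and a: "cmod (a1 - of_real s) < E s" "cmod a2 < E s"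
      and lc: "\<And>d1 d2. \<exists>\<epsilon>>0. \<forall>t. cmod t < \<epsilon> \<longrightarrow> G (a1 + t*d1) (a2 + t*d2) = K"
      and z: "cmod (z1 - of_real s) < E s" "cmod z2 < E s" for s a1 a2 z1 z2
  proof (rule PD[OF _ a lc z])
    fix z1 z2 d1 d2 assume "cmod (z1 - complex_of_real s) < E s" "cmod z2 < E s"
    then have "inW z1 z2" using E[OF s] by blast
    then show "\<exists>r>0. (\<lambda>t. G (z1 + t * d1) (z2 + t * d2)) holomorphic_on ball 0 r" by (rule hol)
  qed
  have lcP: "\<exists>\<epsilon>>0. \<forall>t. cmod t < \<epsilon> \<longrightarrow> G (of_real s' + t*d1) (0 + t*d2) = K" if "P s'" for s' d1 d2
  proof -
    obtain \<delta> where \<delta>: "\<delta> > 0" "\<And>z1 z2. cmod (z1 - of_real s') < \<delta> \<Longrightarrow> cmod z2 < \<delta> \<Longrightarrow> G z1 z2 = K"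
      using \<open>P s'\<close> unfolding P_def by blast
    define \<epsilon> where "\<epsilon> = \<delta> / (cmod d1 + cmod d2 + 1)"
    have \<epsilon>p: "\<epsilon> > 0" using \<delta> unfolding \<epsilon>_def by (simp add: add_nonneg_pos)
    have "G (of_real s' + t*d1) (0 + t*d2) = K" if t: "cmod t < \<epsilon>" for t
    proof (rule \<delta>(2))
      have "cmod t * (cmod d1 + cmod d2 + 1) < \<delta>"
        using t \<delta> unfolding \<epsilon>_def by (simp add: pos_less_divide_eq add_nonneg_pos)
      moreover have "cmod t * cmod d1 \<le> cmod t * (cmod d1 + cmod d2 + 1)"
        "cmod t * cmod d2 \<le> cmod t * (cmod d1 + cmod d2 + 1)"
        by (simp_all add: mult_left_mono)
      ultimately show "cmod (of_real s' + t * d1 - of_real s') < \<delta>" "cmod (0 + t * d2) < \<delta>"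
        by (simp_all add: norm_mult)
    qed
    then show ?thesis using \<epsilon>p by blast
  qed
  have "P 1"
  proof (rule connected_induction_simple[of "{0..1}" 0 1 P])
    show "connected {0..1::real}" by simp
    show "(0::real) \<in> {0..1}" "(1::real) \<in> {0..1}" by auto
    have E0: "E 0 > 0" using E[of 0] by auto
    have "G z1 z2 = K" if "cmod (z1 - of_real 0) < E 0" "cmod z2 < E 0" for z1 z2
    proof (rule key[of 0 0 0])
      show "(0::real) \<in> {0..1}" by simp
      show "cmod (0 - complex_of_real 0) < E 0" "cmod 0 < E 0" using E0 by auto
      show "\<exists>\<epsilon>>0. \<forall>t. cmod t < \<epsilon> \<longrightarrow> G (0 + t * d1) (0 + t * d2) = K" for d1 d2
        using lc0[of d1 d2] by simp
    qed (use that in auto)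
    then show "P 0" unfolding P_def using E0 by blast
  next
    fix s assume s: "s \<in> {0..1::real}"
    have Es: "E s > 0" using E[OF s] by auto
    show "\<exists>T. openin (top_of_set {0..1}) T \<and> s \<in> T \<and> (\<forall>x\<in>T. \<forall>y\<in>T. P x \<longrightarrow> P y)"
    proof (intro exI conjI)
      show "openin (top_of_set {0..1}) ({0..1} \<inter> ball s (E s / 2))" by (intro openin_open_Int) simp
      show "s \<in> {0..1} \<inter> ball s (E s / 2)" using s Es by simp
      show "\<forall>x\<in>{0..1} \<inter> ball s (E s / 2). \<forall>y\<in>{0..1} \<inter> ball s (E s / 2). P x \<longrightarrow> P y"
      proof (intro ballI impI)
        fix x y assume x: "x \<in> {0..1} \<inter> ball s (E s / 2)" and y: "y \<in> {0..1} \<inter> ball s (E s / 2)" and Px: "P x"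
        have xs: "cmod (of_real x - of_real s) < E s"
          using x by (simp add: dist_real_def norm_of_real flip: of_real_diff) (smt (verit) Es abs_minus_commute)
        have ys: "\<bar>y - s\<bar> < E s / 2" using y by (simp add: dist_real_def abs_minus_commute)
        have all: "G z1 z2 = K" if "cmod (z1 - of_real s) < E s" "cmod z2 < E s" for z1 z2
        proof (rule key[OF s _ _ _ that, of "of_real x" 0])
          show "cmod (complex_of_real x - complex_of_real s) < E s" by (rule xs)
          show "cmod 0 < E s" using Es by simp
          show "\<exists>\<epsilon>>0. \<forall>t. cmod t < \<epsilon> \<longrightarrow> G (complex_of_real x + t * d1) (0 + t * d2) = K" for d1 d2
            by (rule lcP[OF Px])
        qed
        have "G z1 z2 = K" if "cmod (z1 - of_real y) < E s / 2" "cmod z2 < E s / 2" for z1 z2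
        proof (rule all)
          have "cmod (z1 - of_real s) \<le> cmod (z1 - of_real y) + cmod (of_real y - of_real s)"
            using norm_triangle_ineq[of "z1 - of_real y" "of_real y - of_real s"] by simp
          also have "cmod (of_real y - of_real s) = \<bar>y - s\<bar>" by (simp flip: of_real_diff)
          finally show "cmod (z1 - of_real s) < E s" using that ys by linarith
          show "cmod z2 < E s" using that Es by linarith
        qed
        then show "P y" unfolding P_def using Es by (intro exI[of _ "E s / 2"]) auto
      qed
    qed
  qed
  then show ?thesis unfolding P_def by simp
qed




lemma lessThan_1_nat: "{..<1::nat} = {0}" "{..<Suc 0} = {0}" by auto
lemma lessThan_2_nat: "{..<2::nat} = {0,1}" by auto

lemma cdual_add: "cdual scY \<phi> \<Longrightarrow> \<phi> (x + y) = \<phi> x + \<phi> y"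
  unfolding cdual_def by blast

lemma cdual_diff: "cdual scY \<phi> \<Longrightarrow> \<phi> (x - y) = \<phi> x - \<phi> y"
proof -
  assume c: "cdual scY \<phi>"
  have "\<phi> ((x - y) + y) = \<phi> (x - y) + \<phi> y" by (rule cdual_add[OF c])
  then show ?thesis by simp
qed

lemma cdual_scaleR:
  assumes "complex_normed_structure scY" "cdual scY \<phi>"
  shows "\<phi> (r *\<^sub>R x) = complex_of_real r * \<phi> x"
proof -
  have "\<phi> (scY (complex_of_real r) x) = complex_of_real r * \<phi> x" using assms(2) unfolding cdual_def by blast
  then show ?thesis using cns_real[OF assms(1)] by simp
qed

lemma sc_eq:
  fixes y y0 :: "'b::real_normed_vector"
  assumes SC: "strictly_convex TYPE('b)" and cns: "complex_normed_structure scY"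
    and cd: "cdual scY \<phi>" and bnd: "\<And>y. cmod (\<phi> y) \<le> norm y"
    and ny: "norm y \<le> M" and ny0: "norm y0 = M"
    and py: "\<phi> y = complex_of_real M" and py0: "\<phi> y0 = complex_of_real M"
  shows "y = y0"
proof (cases "M = 0")
  case True
  then show ?thesis using ny ny0 by simp
next
  case False
  then have Mp: "M > 0" using ny0 norm_ge_zero[of y0] by linarith
  have nyM: "norm y = M" using bnd[of y] py ny Mp by simp
  define a where "a = (1/M) *\<^sub>R y"
  define b where "b = (1/M) *\<^sub>R y0"
  have na: "norm a = 1" "norm b = 1" unfolding a_def b_def using nyM ny0 Mp by simp_all
  show ?thesis
  proof (rule ccontr)
    assume "y \<noteq> y0"
    then have "a \<noteq> b" unfolding a_def b_def using Mp by simp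
    then have lt: "norm ((1/2) *\<^sub>R (a + b)) < 1" using SC na unfolding strictly_convex_def by blast
    have "\<phi> ((1/2) *\<^sub>R (a + b)) = complex_of_real (1/2) * (complex_of_real (1/M) * \<phi> y + complex_of_real (1/M) * \<phi> y0)"
      unfolding a_def b_def by (simp add: cdual_scaleR[OF cns cd] cdual_add[OF cd])
    also have "\<dots> = 1" using Mp py py0 by (simp add: field_simps)
    finally have "cmod 1 \<le> norm ((1/2) *\<^sub>R (a + b))" using bnd by metis
    then show False using lt by simp
  qed
qed

locale setting =
  fixes scX :: "complex \<Rightarrow> 'a::ab_group_add \<Rightarrow> 'a" and scY :: "complex \<Rightarrow> 'b::real_normed_vector \<Rightarrow> 'b"
    and \<Omega> :: "'a set" and f :: "'a \<Rightarrow> 'b"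
  assumes VX: "vector_space scX" and cns: "complex_normed_structure scY"
    and op2: "d_open scX 2 \<Omega>" and hol: "gateaux_holomorphic scX scY \<Omega> f"
begin

sublocale X: vector_space scX by (rule VX)

lemma indep1: "v \<noteq> 0 \<Longrightarrow> lin_indep scX {v}"
  unfolding lin_indep_def by simp

lemma open1:
  assumes A: "d_open scX d A" and d: "1 \<le> d" and v: "v \<noteq> 0" and az: "a + scX z v \<in> A"
  shows "\<exists>\<epsilon>>0. \<forall>z'. cmod (z' - z) < \<epsilon> \<longrightarrow> a + scX z' v \<in> A"
proof -
  have k: "(1::nat) \<in> {1..d}" using d by simp
  have pre: "inj_on (\<lambda>_::nat. v) {..<1} \<and> lin_indep scX ((\<lambda>_::nat. v) ` {..<1})"
    using indep1[OF v] by (simp add: lessThan_1_nat)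
  have az': "a + (\<Sum>i<1. scX ((\<lambda>_. z) i) ((\<lambda>_::nat. v) i)) \<in> A" using az by (simp add: lessThan_1_nat)
  have ex: "\<exists>\<epsilon>>0. \<forall>c'. cmod (c' (0::nat) - z) < \<epsilon> \<longrightarrow> a + scX (c' (0::nat)) v \<in> A"
    using A[unfolded d_open_def, rule_format, where k=1 and a=a and v="\<lambda>_. v" and c="\<lambda>_. z", OF k pre az'] by simp
  then obtain \<epsilon> where \<epsilon>: "\<epsilon> > 0"
    and H0: "\<forall>c'. cmod (c' (0::nat) - z) < \<epsilon> \<longrightarrow> a + scX (c' (0::nat)) v \<in> A" by blast
  have "a + scX z' v \<in> A" if "cmod (z' - z) < \<epsilon>" for z'
    using H0[rule_format, of "\<lambda>_. z'"] that by simp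
  then show ?thesis using \<epsilon> by blast
qed

lemma open2:
  assumes A: "d_open scX 2 A" and uw: "u \<noteq> w" "lin_indep scX {u, w}"
    and az: "a + scX z1 u + scX z2 w \<in> A"
  shows "\<exists>\<epsilon>>0. \<forall>z1' z2'. cmod (z1' - z1) < \<epsilon> \<and> cmod (z2' - z2) < \<epsilon> \<longrightarrow> a + scX z1' u + scX z2' w \<in> A"
proof -
  define vv where "vv i = (if i = 0 then u else w)" for i :: nat
  have k: "(2::nat) \<in> {1..2}" by simp
  have pre: "inj_on vv {..<2} \<and> lin_indep scX (vv ` {..<2})"
    using uw unfolding vv_def by (simp add: lessThan_2_nat insert_commute)
  have az': "a + (\<Sum>i<2. scX ((\<lambda>i. if i = 0 then z1 else z2) i) (vv i)) \<in> A"
    using az by (simp add: lessThan_2_nat vv_def add.assoc)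
  have ex: "\<exists>\<epsilon>>0. \<forall>c'. (\<forall>i<2. cmod (c' i - (if i = 0 then z1 else z2)) < \<epsilon>) \<longrightarrow> a + (\<Sum>i<2. scX (c' i) (vv i)) \<in> A"
    using A[unfolded d_open_def, rule_format, where k=2 and a=a and v=vv and c="\<lambda>i. if i = 0 then z1 else z2", OF k pre az'] by simp
  then obtain \<epsilon> where \<epsilon>: "\<epsilon> > 0"
    and H0: "\<forall>c'. (\<forall>i<2. cmod (c' i - (if i = 0 then z1 else z2)) < \<epsilon>) \<longrightarrow> a + (\<Sum>i<2. scX (c' i) (vv i)) \<in> A"
    by blast
  note H = H0[rule_format]
  have "a + scX z1' u + scX z2' w \<in> A" if "cmod (z1' - z1) < \<epsilon>" "cmod (z2' - z2) < \<epsilon>" for z1' z2'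
  proof -
    have "a + (\<Sum>i<2. scX ((\<lambda>i::nat. if i = 0 then z1' else z2') i) (vv i)) \<in> A"
      by (rule H) (use that in \<open>auto simp: less_2_cases_iff\<close>)
    then show ?thesis by (simp add: lessThan_2_nat vv_def add.assoc)
  qed
  then show ?thesis using \<epsilon> by blast
qed

lemma holline:
  assumes "cdual scY \<phi>" "a \<in> \<Omega>"
  shows "\<exists>r>0. (\<lambda>z. \<phi> (f (a + scX z d))) holomorphic_on ball 0 r"
  using hol assms unfolding gateaux_holomorphic_def by blast

lemma V3: "p + scX (z1 + t*d1) u + scX (z2 + t*d2) w = (p + scX z1 u + scX z2 w) + scX t (scX d1 u + scX d2 w)"
  by (simp add: X.scale_left_distrib X.scale_right_distrib X.scale_scale add_ac)

lemma V3': "p + scX t (scX d1 u + scX d2 w) = p + scX (t*d1) u + scX (t*d2) w"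
  by (simp add: X.scale_right_distrib X.scale_scale add_ac)

lemma V4: "scX (complex_of_real (1 - t)) p + scX (complex_of_real t) q = p + scX (complex_of_real t) (q - p)"
  by (simp add: X.scale_left_diff_distrib X.scale_right_diff_distrib)

lemma dep:
  assumes u: "u \<noteq> 0" and nd: "\<not> (u \<noteq> v \<and> lin_indep scX {u, v})"
  shows "\<exists>l. v = scX l u"
proof (cases "u = v")
  case True then show ?thesis by (intro exI[of _ 1]) simp
next
  case False
  then have "X.dependent {u, v}" using nd unfolding lin_indep_def by blast
  then have "X.dependent (insert v {u})" by (simp add: insert_commute)
  moreover have "X.independent {u}" using u by simp
  ultimately have "v \<in> X.span {u}" using False X.independent_insert[of v "{u}"] by auto
  then show ?thesis unfolding X.span_singleton by auto
qed

lemma exw: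
  assumes dim: "dim_ge2 scX" and u: "u \<noteq> 0"
  shows "\<exists>w. u \<noteq> w \<and> lin_indep scX {u, w}"
proof (rule ccontr)
  assume no: "\<not> ?thesis"
  obtain B where B: "lin_indep scX B" "finite B" "card B = 2" using dim unfolding dim_ge2_def by blast
  then obtain b1 b2 where b: "B = {b1, b2}" "b1 \<noteq> b2" by (auto simp: card_2_iff)
  have ind: "X.independent {b1, b2}" using B(1) b unfolding lin_indep_def by simp
  obtain l1 where l1: "b1 = scX l1 u" using dep[OF u] no by blast
  obtain l2 where l2: "b2 = scX l2 u" using dep[OF u] no by blast
  have "b1 \<noteq> 0" using ind X.dependent_zero by auto
  then have "l1 \<noteq> 0" using l1 by auto
  have "b2 = scX (l2 / l1) b1" using l1 l2 \<open>l1 \<noteq> 0\<close> by (simp add: X.scale_scale)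
  then have "b2 \<in> X.span {b1}" unfolding X.span_singleton by auto
  moreover have "X.independent (insert b2 {b1})" using ind by (simp add: insert_commute)
  ultimately show False using b(2) X.independent_insert[of b2 "{b1}"] by auto
qed

end




context setting
begin

lemma at_c:
  assumes SC: "strictly_convex TYPE('b)" and c: "c \<in> \<Omega>" and tm: "tau1_local_max scX \<Omega> f c"
  shows "\<exists>\<epsilon>>0. \<forall>z. cmod z < \<epsilon> \<longrightarrow> f (c + scX z v) = f c"
proof (cases "v = 0")
  case True
  then show ?thesis by (intro exI[of _ 1]) simp
next
  case False
  obtain U where U: "d_open scX 1 U" "c \<in> U" "\<And>x. x \<in> U \<inter> \<Omega> \<Longrightarrow> norm (f x) \<le> norm (f c)"
    using tm unfolding tau1_local_max_def by blast
  have c0: "c + scX 0 v = c" by simp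
  obtain e1 where e1: "e1 > 0" "\<And>z'. cmod (z' - 0) < e1 \<Longrightarrow> c + scX z' v \<in> U"
    using open1[OF U(1) _ False, of c 0] U(2) by auto
  obtain e2 where e2: "e2 > 0" "\<And>z'. cmod (z' - 0) < e2 \<Longrightarrow> c + scX z' v \<in> \<Omega>"
    using open1[OF op2 _ False, of c 0] c by auto
  obtain \<phi> where \<phi>: "cdual scY \<phi>" "\<phi> (f c) = complex_of_real (norm (f c))" "\<And>y. cmod (\<phi> y) \<le> norm y"
    using complex_HB[OF cns, of "f c"] by blast
  obtain r where r: "r > 0" "(\<lambda>z. \<phi> (f (c + scX z v))) holomorphic_on ball 0 r"
    using holline[OF \<phi>(1) c] by blast
  define e where "e = min (min e1 e2) r"
  have ep: "e > 0" using e1 e2 r unfolding e_def by simp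
  define h where "h z = \<phi> (f (c + scX z v))" for z
  have holh: "h holomorphic_on ball 0 e"
    using r(2) unfolding h_def by (rule holomorphic_on_subset) (auto simp: e_def)
  have h0: "h 0 = complex_of_real (norm (f c))" unfolding h_def using \<phi>(2) by simp
  have inUO: "c + scX z v \<in> U \<inter> \<Omega>" if "z \<in> ball 0 e" for z
    using that e1 e2 unfolding e_def by auto
  have nb: "norm (h z) \<le> norm (h 0)" if "z \<in> ball 0 e" for z
  proof -
    have "norm (h z) \<le> norm (f (c + scX z v))" unfolding h_def by (rule \<phi>(3))
    also have "\<dots> \<le> norm (f c)" by (rule U(3)[OF inUO[OF that]])
    finally show ?thesis using h0 by simp
  qed
  have "h constant_on ball 0 e"
    by (rule maximum_modulus_principle[OF holh, where U="ball 0 e" and \<xi>=0]) (use ep nb in auto)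
  then have hc: "h z = h 0" if "z \<in> ball 0 e" for z
    using that ep unfolding constant_on_def by (metis centre_in_ball)
  have "f (c + scX z v) = f c" if "cmod z < e" for z
  proof (rule sc_eq[OF SC cns \<phi>(1) \<phi>(3)])
    have zb: "z \<in> ball 0 e" using that by simp
    show "norm (f (c + scX z v)) \<le> norm (f c)" by (rule U(3)[OF inUO[OF zb]])
    show "norm (f c) = norm (f c)" ..
    show "\<phi> (f (c + scX z v)) = complex_of_real (norm (f c))" using hc[OF zb] h0 unfolding h_def by simp
    show "\<phi> (f c) = complex_of_real (norm (f c))" by (rule \<phi>(2))
  qed
  then show ?thesis using ep by blast
qed

definition good :: "('b \<Rightarrow> complex) \<Rightarrow> complex \<Rightarrow> 'a \<Rightarrow> bool" where
  "good \<phi> K p \<longleftrightarrow> p \<in> \<Omega> \<and> (\<forall>v. \<exists>\<epsilon>>0. \<forall>z. cmod z < \<epsilon> \<longrightarrow> \<phi> (f (p + scX z v)) = K)"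

lemma seg_step:
  assumes cd: "cdual scY \<phi>" and dim: "dim_ge2 scX" and gp: "good \<phi> K p" and sg: "seg scX p q \<subseteq> \<Omega>"
  shows "good \<phi> K q"
proof -
  define u where "u = q - p"
  have qpu: "q = p + scX 1 u" unfolding u_def by simp
  have segpt: "p + scX (complex_of_real s) u \<in> \<Omega>" if "0 \<le> s" "s \<le> 1" for s
  proof -
    have "scX (complex_of_real (1 - s)) p + scX (complex_of_real s) q \<in> seg scX p q"
      unfolding seg_def using that by blast
    then show ?thesis using sg unfolding V4 u_def by blast
  qed
  have qO: "q \<in> \<Omega>" using segpt[of 1] qpu by simp
  have pO: "p \<in> \<Omega>" and gpv: "\<And>v. \<exists>\<epsilon>>0. \<forall>z. cmod z < \<epsilon> \<longrightarrow> \<phi> (f (p + scX z v)) = K"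
    using gp unfolding good_def by auto
  show ?thesis
  proof (cases "u = 0")
    case True
    then have "q = p" unfolding u_def by simp
    then show ?thesis using gp by simp
  next
    case False
    have main: "\<exists>\<delta>>0. \<forall>z1 z2. cmod (z1 - 1) < \<delta> \<and> cmod z2 < \<delta> \<longrightarrow> \<phi> (f (p + scX z1 u + scX z2 w)) = K"
      if uw: "u \<noteq> w" "lin_indep scX {u, w}" for w
    proof (rule AL[where inW = "\<lambda>z1 z2. p + scX z1 u + scX z2 w \<in> \<Omega>"])
      fix z1 z2 d1 d2
      assume "p + scX z1 u + scX z2 w \<in> \<Omega>"
      from holline[OF cd this, of "scX d1 u + scX d2 w"] obtain r where r: "r > 0"
        and H: "(\<lambda>t. \<phi> (f (p + scX z1 u + scX z2 w + scX t (scX d1 u + scX d2 w)))) holomorphic_on ball 0 r"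
        by blast
      have "(\<lambda>t. \<phi> (f (p + scX (z1 + t * d1) u + scX (z2 + t * d2) w))) =
            (\<lambda>t. \<phi> (f (p + scX z1 u + scX z2 w + scX t (scX d1 u + scX d2 w))))"
        by (simp only: V3)
      then show "\<exists>r>0. (\<lambda>t. \<phi> (f (p + scX (z1 + t * d1) u + scX (z2 + t * d2) w))) holomorphic_on ball 0 r"
        using r H by auto
    next
      fix s :: real assume s: "0 \<le> s" "s \<le> 1"
      have "p + scX (complex_of_real s) u + scX 0 w \<in> \<Omega>" using segpt[OF s] by simp
      from open2[OF op2 uw this] obtain \<epsilon> where "\<epsilon> > 0"
        "\<forall>z1' z2'. cmod (z1' - complex_of_real s) < \<epsilon> \<and> cmod (z2' - 0) < \<epsilon> \<longrightarrow> p + scX z1' u + scX z2' w \<in> \<Omega>"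
        by blast
      then show "\<exists>\<epsilon>>0. \<forall>z1 z2. cmod (z1 - complex_of_real s) < \<epsilon> \<and> cmod z2 < \<epsilon> \<longrightarrow> p + scX z1 u + scX z2 w \<in> \<Omega>"
        by auto
    next
      fix d1 d2
      obtain \<epsilon> where "\<epsilon> > 0" "\<forall>z. cmod z < \<epsilon> \<longrightarrow> \<phi> (f (p + scX z (scX d1 u + scX d2 w))) = K"
        using gpv by blast
      then show "\<exists>\<epsilon>>0. \<forall>t. cmod t < \<epsilon> \<longrightarrow> \<phi> (f (p + scX (t * d1) u + scX (t * d2) w)) = K"
        unfolding V3' by blast
    qed
    have "\<exists>\<epsilon>>0. \<forall>z. cmod z < \<epsilon> \<longrightarrow> \<phi> (f (q + scX z v)) = K" for v
    proof (cases "u \<noteq> v \<and> lin_indep scX {u, v}")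
      case True
      obtain \<delta> where \<delta>: "\<delta> > 0" "\<forall>z1 z2. cmod (z1 - 1) < \<delta> \<and> cmod z2 < \<delta> \<longrightarrow> \<phi> (f (p + scX z1 u + scX z2 v)) = K"
        using main[of v] True by blast
      have "\<phi> (f (q + scX z v)) = K" if "cmod z < \<delta>" for z
        using \<delta>(2)[rule_format, of 1 z] that \<delta>(1) qpu by simp
      then show ?thesis using \<delta>(1) by blast
    next
      case nd: False
      obtain l where l: "v = scX l u" using dep[OF False nd] by blast
      obtain w where w: "u \<noteq> w" "lin_indep scX {u, w}" using exw[OF dim False] by blast
      obtain \<delta> where \<delta>: "\<delta> > 0" "\<forall>z1 z2. cmod (z1 - 1) < \<delta> \<and> cmod z2 < \<delta> \<longrightarrow> \<phi> (f (p + scX z1 u + scX z2 w)) = K"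
        using main[OF w] by blast
      define \<epsilon> where "\<epsilon> = \<delta> / (cmod l + 1)"
      have \<epsilon>p: "\<epsilon> > 0" unfolding \<epsilon>_def using \<delta>(1) by (simp add: add_nonneg_pos)
      have "\<phi> (f (q + scX z v)) = K" if z: "cmod z < \<epsilon>" for z
      proof -
        have "cmod z * (cmod l + 1) < \<delta>" using z \<delta>(1) unfolding \<epsilon>_def
          by (simp add: pos_less_divide_eq add_nonneg_pos)
        moreover have "cmod z * cmod l \<le> cmod z * (cmod l + 1)" by (simp add: mult_left_mono)
        ultimately have lt: "cmod ((1 + z * l) - 1) < \<delta>" by (simp add: norm_mult)
        have eq: "q + scX z v = p + scX (1 + z * l) u + scX 0 w"
          unfolding qpu l by (simp add: X.scale_left_distrib X.scale_scale add.assoc)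
        show ?thesis unfolding eq using \<delta>(2)[rule_format, of "1 + z * l" 0] lt \<delta>(1) by simp
      qed
      then show ?thesis using \<epsilon>p by blast
    qed
    then show ?thesis unfolding good_def using qO by blast
  qed
qed

theorem main_setting:
  assumes dim: "dim_ge2 scX" and SC: "strictly_convex TYPE('b)"
    and pc: "polygonally_connected scX \<Omega>" and c: "c \<in> \<Omega>" and tm: "tau1_local_max scX \<Omega> f c"
  shows "\<exists>y. \<forall>x\<in>\<Omega>. f x = y"
proof (intro exI ballI)
  fix x assume x: "x \<in> \<Omega>"
  obtain \<phi> where \<phi>: "cdual scY \<phi>" "\<phi> (f x - f c) = complex_of_real (norm (f x - f c))"
    using complex_HB[OF cns, of "f x - f c"] by blast
  define K where "K = \<phi> (f c)"
  have gc: "good \<phi> K c"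
    unfolding good_def K_def
  proof (intro conjI allI c)
    fix v
    obtain \<epsilon> where "\<epsilon> > 0" "\<forall>z. cmod z < \<epsilon> \<longrightarrow> f (c + scX z v) = f c" using at_c[OF SC c tm] by blast
    then show "\<exists>\<epsilon>>0. \<forall>z. cmod z < \<epsilon> \<longrightarrow> \<phi> (f (c + scX z v)) = \<phi> (f c)" by auto
  qed
  obtain ps where ps: "ps \<noteq> []" "hd ps = c" "last ps = x"
    and segs: "\<And>i. Suc i < length ps \<Longrightarrow> seg scX (ps ! i) (ps ! Suc i) \<subseteq> \<Omega>"
    using pc c x unfolding polygonally_connected_def by blast
  have "i < length ps \<longrightarrow> good \<phi> K (ps ! i)" for i
  proof (induction i)
    case 0
    then show ?case using gc ps by (simp add: hd_conv_nth)
  next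
    case (Suc i)
    then show ?case using seg_step[OF \<phi>(1) dim _ segs[of i]] by simp
  qed
  then have "good \<phi> K (ps ! (length ps - 1))" using ps(1) by simp
  then have "good \<phi> K x" using ps by (simp add: last_conv_nth)
  then have "\<phi> (f x) = K" unfolding good_def
    by (metis add.right_neutral norm_zero X.scale_zero_left zero_less_norm_iff)
  then have "\<phi> (f x - f c) = 0" unfolding K_def cdual_diff[OF \<phi>(1)] by simp
  then show "f x = f c" using \<phi>(2) by simp
qed

end



theorem mainTheorem5:
  fixes scX :: "complex \<Rightarrow> 'a::ab_group_add \<Rightarrow> 'a"
    and scY :: "complex \<Rightarrow> 'b::banach \<Rightarrow> 'b"
    and \<Omega> :: "'a set" and f :: "'a \<Rightarrow> 'b"
  assumes "vector_space scX"
    and "dim_ge2 scX"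
    and "complex_normed_structure scY"
    and "strictly_convex TYPE('b)"
    and "polygonally_connected scX \<Omega>"
    and "d_open scX 2 \<Omega>"
    and "gateaux_holomorphic scX scY \<Omega> f"
    and "c \<in> \<Omega>"
    and "tau1_local_max scX \<Omega> f c"
  shows "\<exists>y. \<forall>x\<in>\<Omega>. f x = y"
  proof -
  have st: "setting scX scY \<Omega> f" by (rule setting.intro) (rule assms)+
  show ?thesis by (rule setting.main_setting[OF st assms(2) assms(4) assms(5) assms(8) assms(9)])
qed

end
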